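(* Let $P$ be a probability measure on $(\Omega,\mathcal{M})$, $\tau:\Omega\to[0,\infty]$ measurable, and $Q\in\mathcal{U}^\Lambda(P)$ for some $\Lambda:[0,\infty)\to[0,\infty]$ with $\Lambda(0)=0$ that is finite on a neighborhood of $0$. Then $$\log\Big[\int\tau\,dQ\Big]\le\inf_{c>1}\Big\{\frac1c\log\Big[\int\tau^c\,dP\Big]+\frac{c-1}{c}\Lambda\big(1/(c-1)\big)\Big\},$$ with the convention $-\infty+\infty=\infty$.
   Context: $\tau^c=\exp(c\log\tau)$ with continuous extensions of $\exp,\log$ to extended reals. $\Lambda_Q^f(\lambda)=\log E_Q[e^{\lambda f}]$. $\mathcal{U}^\Lambda(P)=\{Q \text{ probability measure}: Q\ll P,\ \Lambda_Q^{\log(dQ/dP)}(\lambda)\le\Lambda(\lambda)\ \text{for all }\lambda>0\}$. *)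

theory Defs
  imports "HOL-Probability.Probability"
begin

definition ext_log :: "ennreal \<Rightarrow> ereal" where
  "ext_log x = (if x = 0 then - \<infinity> else if x = \<infinity> then \<infinity> else ereal (ln (enn2real x)))"

definition ext_exp :: "ereal \<Rightarrow> ennreal" where
  "ext_exp y = (if y = - \<infinity> then 0 else if y = \<infinity> then \<infinity> else ennreal (exp (real_of_ereal y)))"

definition ext_pow :: "ennreal \<Rightarrow> real \<Rightarrow> ennreal" where
  "ext_pow t c = ext_exp (ereal c * ext_log t)"

definition cgf :: "'a measure \<Rightarrow> ('a \<Rightarrow> ereal) \<Rightarrow> real \<Rightarrow> ereal" where
  "cgf Q f l = ext_log (\<integral>\<^sup>+ \<omega>. ext_exp (ereal l * f \<omega>) \<partial>Q)"

definition U_set :: "(real \<Rightarrow> ereal) \<Rightarrow> 'a measure \<Rightarrow> 'a measure set" where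
  "U_set \<Lambda> P = {Q. prob_space Q \<and> sets Q = sets P \<and> absolutely_continuous P Q \<and>
      (\<forall>l>0. cgf Q (\<lambda>\<omega>. ext_log (RN_deriv P Q \<omega>)) l \<le> \<Lambda> l)}"

end

theory Submission
  imports Defs
begin

lemma ext_pow_alt:
  assumes "c > 0"
  shows "ext_pow x c = (if x = \<infinity> then \<infinity> else ennreal (enn2real x powr c))"
proof (cases x rule: ennreal_cases)
  case (real r)
  show ?thesis
  proof (cases "r = 0")
    case True
    then show ?thesis using real assms by (simp add: ext_pow_def ext_log_def ext_exp_def)
  next
    case False
    then have "r > 0" using real by simp
    then show ?thesis using real assms
      by (simp add: ext_pow_def ext_log_def ext_exp_def powr_def)
  qed
next
  case top
  then show ?thesis using assms by (simp add: ext_pow_def ext_log_def ext_exp_def)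
qed

lemma ext_pow_meas[measurable]:
  assumes "c > 0" "f \<in> borel_measurable M"
  shows "(\<lambda>x. ext_pow (f x) c) \<in> borel_measurable M"
  unfolding ext_pow_alt[OF assms(1)] using assms(2) by measurable

lemma ext_pow_zero_iff:
  assumes "c > 0"
  shows "ext_pow x c = 0 \<longleftrightarrow> x = 0"
  using assms by (cases x rule: ennreal_cases) (auto simp: ext_pow_alt)

lemma ext_log_mono:
  assumes "x \<le> y" shows "ext_log x \<le> ext_log y"
proof (cases x rule: ennreal_cases)
  case (real r)
  show ?thesis
  proof (cases y rule: ennreal_cases)
    case (real s)
    then show ?thesis using \<open>x = ennreal r\<close> \<open>0 \<le> r\<close> assms
      by (auto simp: ext_log_def ennreal_le_iff)
  qed (auto simp: ext_log_def)
qed (use assms in \<open>auto simp: ext_log_def top_unique\<close>)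

lemma ext_log_ennreal: "r > 0 \<Longrightarrow> ext_log (ennreal r) = ereal (ln r)"
  by (simp add: ext_log_def)

lemma young_real:
  fixes x y a b p q :: real
  assumes "x \<ge> 0" "y \<ge> 0" "a > 0" "b > 0" "p > 1" "q > 1" "1/p + 1/q = 1"
  shows "x * y \<le> (a powr (1/p) * b powr (1/q) / (p * a)) * x powr p
               + (a powr (1/p) * b powr (1/q) / (q * b)) * y powr q"
proof -
  define K where "K = a powr (1/p) * b powr (1/q)"
  have Kp: "K > 0" using assms by (simp add: K_def)
  define A where "A = x / a powr (1/p)"
  define B where "B = y / b powr (1/q)"
  have A0: "A \<ge> 0" "B \<ge> 0" using assms by (auto simp: A_def B_def)
  have "A * B \<le> A powr p / p + B powr q / q"
    using Youngs_inequality[OF assms(5,6,7) A0] .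
  moreover have "A powr p = x powr p / a"
    using assms by (simp add: A_def powr_divide powr_powr)
  moreover have "B powr q = y powr q / b"
    using assms by (simp add: B_def powr_divide powr_powr)
  moreover have "x * y = K * (A * B)"
    using assms by (simp add: A_def B_def K_def)
  ultimately have "x * y \<le> K * (x powr p / a / p + y powr q / b / q)"
    using Kp by (metis mult_le_cancel_left_pos)
  also have "K * (x powr p / a / p + y powr q / b / q) =
     (K / (p * a)) * x powr p + (K / (q * b)) * y powr q"
    by (simp add: distrib_left mult.commute)
  finally show ?thesis by (simp add: K_def)
qed

lemma young_enn:
  fixes x y :: ennreal and a b p q :: real
  assumes "a > 0" "b > 0" "p > 1" "q > 1" "1/p + 1/q = 1"
  shows "x * y \<le> ennreal (a powr (1/p) * b powr (1/q) / (p * a)) * ext_pow x p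
               + ennreal (a powr (1/p) * b powr (1/q) / (q * b)) * ext_pow y q"
proof -
  have al: "a powr (1/p) * b powr (1/q) / (p * a) > 0" "a powr (1/p) * b powr (1/q) / (q * b) > 0"
    using assms by auto
  show ?thesis
  proof (cases "x = \<infinity> \<or> y = \<infinity>")
    case True
    then show ?thesis
    proof
      assume "x = \<infinity>"
      then have "ennreal (a powr (1/p) * b powr (1/q) / (p * a)) * ext_pow x p = \<infinity>"
        using al assms by (simp add: ext_pow_alt ennreal_mult_eq_top_iff)
      then show ?thesis by simp
    next
      assume "y = \<infinity>"
      then have "ennreal (a powr (1/p) * b powr (1/q) / (q * b)) * ext_pow y q = \<infinity>"
        using al assms by (simp add: ext_pow_alt ennreal_mult_eq_top_iff)
      then show ?thesis by simp
    qed
  next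
    case False
    define r where "r = enn2real x"
    define s where "s = enn2real y"
    have r: "x = ennreal r" "r \<ge> 0" using False by (auto simp: r_def ennreal_enn2real_if)
    have s: "y = ennreal s" "s \<ge> 0" using False by (auto simp: s_def ennreal_enn2real_if)
    have "r * s \<le> (a powr (1/p) * b powr (1/q) / (p * a)) * r powr p
               + (a powr (1/p) * b powr (1/q) / (q * b)) * s powr q"
      using young_real[OF r(2) s(2) assms] .
    then have "ennreal (r * s) \<le> ennreal ((a powr (1/p) * b powr (1/q) / (p * a)) * r powr p
               + (a powr (1/p) * b powr (1/q) / (q * b)) * s powr q)"
      by (rule ennreal_leI)
    also have "\<dots> = ennreal ((a powr (1/p) * b powr (1/q) / (p * a)) * r powr p)
               + ennreal ((a powr (1/p) * b powr (1/q) / (q * b)) * s powr q)"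
      by (intro ennreal_plus mult_nonneg_nonneg) (use al in auto)
    also have "ennreal ((a powr (1/p) * b powr (1/q) / (p * a)) * r powr p)
       = ennreal (a powr (1/p) * b powr (1/q) / (p * a)) * ext_pow x p"
      using al assms r by (subst ennreal_mult) (auto simp: ext_pow_alt)
    also have "ennreal ((a powr (1/p) * b powr (1/q) / (q * b)) * s powr q)
       = ennreal (a powr (1/p) * b powr (1/q) / (q * b)) * ext_pow y q"
      using al assms s by (subst ennreal_mult) (auto simp: ext_pow_alt)
    also have "ennreal (r * s) = x * y" using r s by (simp add: ennreal_mult)
    finally show ?thesis .
  qed
qed

lemma holder_log:
  fixes f g :: "'a \<Rightarrow> ennreal" and p q :: real
  assumes f[measurable]: "f \<in> borel_measurable M" and g[measurable]: "g \<in> borel_measurable M"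
    and pq: "p > 1" "q > 1" "1/p + 1/q = 1"
  shows "ext_log (\<integral>\<^sup>+x. f x * g x \<partial>M) \<le>
     ereal (1/p) * ext_log (\<integral>\<^sup>+x. ext_pow (f x) p \<partial>M)
   + ereal (1/q) * ext_log (\<integral>\<^sup>+x. ext_pow (g x) q \<partial>M)"
proof -
  define F where "F = (\<integral>\<^sup>+x. ext_pow (f x) p \<partial>M)"
  define G where "G = (\<integral>\<^sup>+x. ext_pow (g x) q \<partial>M)"
  have p0: "p > 0" "q > 0" using pq by auto
  have zero: "ext_log (\<integral>\<^sup>+x. f x * g x \<partial>M) = - \<infinity>" if "F = 0 \<or> G = 0"
  proof -
    have "AE x in M. f x * g x = 0"
    proof (cases "F = 0")
      case True
      then have "AE x in M. ext_pow (f x) p = 0"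
        unfolding F_def using p0 by (subst (asm) nn_integral_0_iff_AE) auto
      then show ?thesis by eventually_elim (use p0 in \<open>simp add: ext_pow_zero_iff\<close>)
    next
      case False
      then have "G = 0" using that by simp
      then have "AE x in M. ext_pow (g x) q = 0"
        unfolding G_def using p0 by (subst (asm) nn_integral_0_iff_AE) auto
      then show ?thesis by eventually_elim (use p0 in \<open>simp add: ext_pow_zero_iff\<close>)
    qed
    then have "(\<integral>\<^sup>+x. f x * g x \<partial>M) = 0"
      by (subst nn_integral_0_iff_AE) auto
    then show ?thesis by (simp add: ext_log_def)
  qed
  show ?thesis
  proof (cases "F = 0 \<or> G = 0")
    case True
    then show ?thesis using zero by simp
  next
    case nz: False
    show ?thesis
    proof (cases "F = \<infinity> \<or> G = \<infinity>")
      case True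
      then show ?thesis
      proof
        assume "F = \<infinity>"
        then have e: "ext_log (\<integral>\<^sup>+x. ext_pow (f x) p \<partial>M) = \<infinity>"
          unfolding F_def by (simp add: ext_log_def)
        show ?thesis using p0 by (simp add: e)
      next
        assume "G = \<infinity>"
        then have e: "ext_log (\<integral>\<^sup>+x. ext_pow (g x) q \<partial>M) = \<infinity>"
          unfolding G_def by (simp add: ext_log_def)
        show ?thesis using p0 by (simp add: e)
      qed
    next
      case False
      define a where "a = enn2real F"
      define b where "b = enn2real G"
      have a: "F = ennreal a" "a > 0" using False nz unfolding a_def
        by (cases F rule: ennreal_cases; auto)+
      have b: "G = ennreal b" "b > 0" using False nz unfolding b_def
        by (cases G rule: ennreal_cases; auto)+
      define K where "K = a powr (1/p) * b powr (1/q)"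
      have Kp: "K > 0" using a b by (simp add: K_def)
      have "(\<integral>\<^sup>+x. f x * g x \<partial>M) \<le> (\<integral>\<^sup>+x. ennreal (K / (p * a)) * ext_pow (f x) p
               + ennreal (K / (q * b)) * ext_pow (g x) q \<partial>M)"
        by (rule nn_integral_mono) (use young_enn[OF a(2) b(2) pq] in \<open>simp add: K_def\<close>)
      also have "\<dots> = ennreal (K / (p * a)) * F + ennreal (K / (q * b)) * G"
        unfolding F_def G_def using p0
        by (simp add: nn_integral_add nn_integral_cmult)
      also have "\<dots> = ennreal (K / (p * a) * a + K / (q * b) * b)"
      proof -
        have "ennreal (K / (p * a) * a + K / (q * b) * b) =
              ennreal (K / (p * a) * a) + ennreal (K / (q * b) * b)"
          using a b Kp p0 by (intro ennreal_plus) auto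
        also have "\<dots> = ennreal (K / (p * a)) * F + ennreal (K / (q * b)) * G"
          using a b Kp p0 by (subst (1 2) ennreal_mult) auto
        finally show ?thesis by simp
      qed
      also have "K / (p * a) * a + K / (q * b) * b = K * (1/p + 1/q)"
        using a b p0 by (simp add: field_simps)
      also have "\<dots> = K" using pq by simp
      finally have le: "(\<integral>\<^sup>+x. f x * g x \<partial>M) \<le> ennreal K" .
      have "ext_log (\<integral>\<^sup>+x. f x * g x \<partial>M) \<le> ereal (ln K)"
        using ext_log_mono[OF le] Kp by (simp add: ext_log_ennreal)
      also have "ln K = (1/p) * ln a + (1/q) * ln b"
        using a b by (simp add: K_def ln_mult ln_powr)
      also have "ereal ((1/p) * ln a + (1/q) * ln b) =
          ereal (1/p) * ext_log F + ereal (1/q) * ext_log G"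
        using a b by (simp add: ext_log_ennreal)
      finally show ?thesis unfolding F_def G_def .
    qed
  qed
qed

theorem mainTheorem11:
  fixes P Q :: "'a measure" and \<tau> :: "'a \<Rightarrow> ennreal" and \<Lambda> :: "real \<Rightarrow> ereal"
  assumes "prob_space P"
    and "\<tau> \<in> borel_measurable P"
    and "\<forall>l\<ge>0. \<Lambda> l \<ge> 0"
    and "\<Lambda> 0 = 0"
    and "\<exists>\<delta>>0. \<forall>l. 0 \<le> l \<and> l < \<delta> \<longrightarrow> \<Lambda> l < \<infinity>"
    and "Q \<in> U_set \<Lambda> P"
  shows "ext_log (\<integral>\<^sup>+ \<omega>. \<tau> \<omega> \<partial>Q) \<le>
    (INF c \<in> {1<..}. ereal (1 / c) * ext_log (\<integral>\<^sup>+ \<omega>. ext_pow (\<tau> \<omega>) c \<partial>P)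
                      + ereal ((c - 1) / c) * \<Lambda> (1 / (c - 1)))"
proof (rule INF_greatest)
  interpret prob_space P by fact
  have tm[measurable]: "\<tau> \<in> borel_measurable P" by fact
  define Z where "Z = RN_deriv P Q"
  have Zm[measurable]: "Z \<in> borel_measurable P" unfolding Z_def by simp
  from assms(6) have sQ: "sets Q = sets P" and ac: "absolutely_continuous P Q"
    and cg: "\<forall>l>0. cgf Q (\<lambda>\<omega>. ext_log (Z \<omega>)) l \<le> \<Lambda> l"
    by (auto simp: U_set_def Z_def)
  have RN: "integral\<^sup>N Q h = (\<integral>\<^sup>+x. Z x * h x \<partial>P)" if "h \<in> borel_measurable P" for h
    unfolding Z_def by (rule RN_deriv_nn_integral[OF ac sQ that])
  fix c :: real assume "c \<in> {1<..}"
  then have c1: "c > 1" by simp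
  define l where "l = 1 / (c - 1)"
  define q where "q = c / (c - 1)"
  have l0: "l > 0" using c1 by (simp add: l_def)
  have q1: "q > 1" using c1 by (simp add: q_def)
  have pq: "1/c + 1/q = 1" using c1 by (simp add: q_def field_simps)
  have lq: "l + 1 = q" using c1 by (simp add: l_def q_def field_simps)
  have pt: "Z x * ext_pow (Z x) l = ext_pow (Z x) q" for x
  proof (cases "Z x" rule: ennreal_cases)
    case (real r)
    then show ?thesis using l0 q1 lq[symmetric]
      by (cases "r = 0") (auto simp: ext_pow_alt ennreal_mult[symmetric] powr_add)
  next
    case top then show ?thesis using l0 q1 by (simp add: ext_pow_alt)
  qed
  have "cgf Q (\<lambda>\<omega>. ext_log (Z \<omega>)) l = ext_log (\<integral>\<^sup>+x. ext_pow (Z x) l \<partial>Q)"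
    by (simp add: cgf_def ext_pow_def)
  also have "(\<integral>\<^sup>+x. ext_pow (Z x) l \<partial>Q) = (\<integral>\<^sup>+x. ext_pow (Z x) q \<partial>P)"
    using l0 by (subst RN) (auto simp: pt)
  finally have cgeq: "cgf Q (\<lambda>\<omega>. ext_log (Z \<omega>)) l = ext_log (\<integral>\<^sup>+x. ext_pow (Z x) q \<partial>P)" .
  have A: "(\<integral>\<^sup>+ \<omega>. \<tau> \<omega> \<partial>Q) = (\<integral>\<^sup>+x. \<tau> x * Z x \<partial>P)"
    by (subst RN) (auto simp: mult.commute)
  have "ext_log (\<integral>\<^sup>+ \<omega>. \<tau> \<omega> \<partial>Q) \<le>
     ereal (1/c) * ext_log (\<integral>\<^sup>+x. ext_pow (\<tau> x) c \<partial>P)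
   + ereal (1/q) * ext_log (\<integral>\<^sup>+x. ext_pow (Z x) q \<partial>P)"
    unfolding A by (rule holder_log[OF tm Zm c1 q1 pq])
  also have "ereal (1/q) * ext_log (\<integral>\<^sup>+x. ext_pow (Z x) q \<partial>P) \<le> ereal ((c - 1) / c) * \<Lambda> (1 / (c - 1))"
  proof -
    have "1/q = (c-1)/c" using c1 by (simp add: q_def)
    moreover have "ext_log (\<integral>\<^sup>+x. ext_pow (Z x) q \<partial>P) \<le> \<Lambda> l"
      using cg l0 cgeq by metis
    ultimately show ?thesis using c1 unfolding l_def
      by (auto intro!: ereal_mult_left_mono)
  qed
  finally show "ext_log (\<integral>\<^sup>+ \<omega>. \<tau> \<omega> \<partial>Q) \<le> ereal (1 / c) * ext_log (\<integral>\<^sup>+ \<omega>. ext_pow (\<tau> \<omega>) c \<partial>P)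
                      + ereal ((c - 1) / c) * \<Lambda> (1 / (c - 1))"
    by (simp add: add_left_mono)
qed

end
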